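(* Let $(\mathtt V_k,\mathcal F_k)$ be a nonnegative adapted sequence satisfying, almost surely for all $k$, $$\mathbb E[\mathtt V_k|\mathcal F_{k-1}]\le\Big(1-\frac ak+\gamma_k\Big)\mathtt V_{k-1}+\frac{C}{k^b},$$ where $a>0$, $b>1$, $C>0$ are constants and $(\gamma_k)$ is a nonnegative deterministic sequence with $\sum_k\gamma_k<\infty$. Then almost surely $\mathtt V_k=O(k^{-a})$ if $b-a>1$, and $\mathtt V_k=O\big((\ln k)^2/k^{b-1}\big)$ if $b-a\le1$. *)

theory Defs
  imports "HOL-Probability.Probability" "HOL-Library.Landau_Symbols"
begin

end

theory Submission
  imports Defs
begin

lemma int_ind:
  fixes f :: "'a \<Rightarrow> real"
  shows "A \<in> sets M \<Longrightarrow> integrable M f \<Longrightarrow> integrable M (\<lambda>x. indicator A x * f x)"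
  using integrable_mult_indicator[of A M f] by simp

lemma maximal_bounded:
  fixes M :: "'w measure" and G :: "nat \<Rightarrow> 'w measure" and U :: "nat \<Rightarrow> 'w \<Rightarrow> real"
  assumes P: "prob_space M"
    and sub: "\<And>n. subalgebra M (G n)"
    and mono: "\<And>n. sets (G n) \<subseteq> sets (G (Suc n))"
    and meas: "\<And>n. U n \<in> borel_measurable (G n)"
    and integ: "\<And>n. integrable M (U n)"
    and nonneg: "\<And>n x. x \<in> space M \<Longrightarrow> U n x \<ge> 0"
    and step: "\<And>n A. A \<in> sets (G n) \<Longrightarrow>
        (\<integral>x. indicator A x * U (Suc n) x \<partial>M) \<le> (\<integral>x. indicator A x * U n x \<partial>M)"
  shows "AE x in M. \<exists>B. \<forall>n. U n x \<le> B"
proof -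
  interpret prob_space M by (rule P)
  have spG: "space (G n) = space M" for n using sub[of n] by (simp add: subalgebra_def)
  have setsG: "sets (G j) \<subseteq> sets (G n)" if "j \<le> n" for j n
    using that proof (induction n)
    case 0 then show ?case by simp
  next
    case (Suc n) then show ?case using mono[of n] by (cases "j = Suc n") auto
  qed
  have measG: "U j \<in> borel_measurable (G n)" if "j \<le> n" for j n
    using measurable_mono[OF order_refl refl setsG[OF that] spG[of j, unfolded spG[of n, symmetric]]] meas[of j]
    by blast
  have measM: "U n \<in> borel_measurable M" for n using measurable_from_subalg[OF sub meas] .
  have setsM: "A \<in> sets M" if "A \<in> sets (G n)" for A n using sub[of n] that by (auto simp: subalgebra_def)
  define E where "E = (\<integral>x. U 0 x \<partial>M)"
  have key: "lam * measure M {x\<in>space M. \<exists>j. U j x \<ge> lam} \<le> E" if lam: "lam > 0" for lam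
  proof -
    define Bs where "Bs n = {x\<in>space M. \<exists>j\<le>n. U j x \<ge> lam}" for n
    have BsG: "Bs n \<in> sets (G n)" for n
    proof -
      have "Bs n = (\<Union>j\<in>{..n}. {x\<in>space (G n). U j x \<ge> lam})" by (auto simp: Bs_def spG)
      also have "\<dots> \<in> sets (G n)"
        using measG by (intro sets.finite_UN) auto
      finally show ?thesis .
    qed
    have BsM: "Bs n \<in> sets M" for n using setsM[OF BsG] .
    have inv: "lam * measure M (Bs n) + (\<integral>x. indicator (space M - Bs n) x * U n x \<partial>M) \<le> E" for n
    proof (induction n)
      case 0
      have "Bs 0 = {x\<in>space M. U 0 x \<ge> lam}" by (auto simp: Bs_def)
      have "lam * measure M (Bs 0) = (\<integral>x. indicator (Bs 0) x * lam \<partial>M)"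
        using BsM by simp
      also have "\<dots> \<le> (\<integral>x. indicator (Bs 0) x * U 0 x \<partial>M)"
      proof (rule integral_mono)
        show "integrable M (\<lambda>x. indicator (Bs 0) x * lam)"
          by (rule int_ind[OF BsM]) simp
        show "integrable M (\<lambda>x. indicator (Bs 0) x * U 0 x)"
          by (rule int_ind[OF BsM integ])
      qed
           (auto simp: Bs_def indicator_def)
      finally have 1: "lam * measure M (Bs 0) \<le> (\<integral>x. indicator (Bs 0) x * U 0 x \<partial>M)" .
      have "(\<integral>x. indicator (Bs 0) x * U 0 x \<partial>M) + (\<integral>x. indicator (space M - Bs 0) x * U 0 x \<partial>M)
          = (\<integral>x. indicator (Bs 0) x * U 0 x + indicator (space M - Bs 0) x * U 0 x \<partial>M)"
        by (rule Bochner_Integration.integral_add[symmetric]) (auto intro!: int_ind integ BsM)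
      also have "\<dots> = E" unfolding E_def
        by (intro Bochner_Integration.integral_cong) (auto simp: indicator_def Bs_def)
      finally show ?case using 1 by simp
    next
      case (Suc n)
      define S where "S = space M - Bs n"
      define D where "D = S \<inter> {x\<in>space M. U (Suc n) x \<ge> lam}"
      have SG: "S \<in> sets (G n)" unfolding S_def using BsG[of n] spG[of n]
        by (metis sets.compl_sets)
      have SM: "S \<in> sets M" using setsM[OF SG] .
      have DM: "D \<in> sets M" unfolding D_def using SM measM by measurable
      have BsS: "Bs (Suc n) = Bs n \<union> D" unfolding D_def S_def Bs_def
        by (auto simp: le_Suc_eq)
      have SD: "space M - Bs (Suc n) = S - D" unfolding D_def S_def Bs_def
        by (auto simp: le_Suc_eq)
      have mB: "measure M (Bs (Suc n)) = measure M (Bs n) + measure M D"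
        unfolding BsS using BsM DM by (intro finite_measure_Union) (auto simp: D_def S_def)
      have "lam * measure M D = (\<integral>x. indicator D x * lam \<partial>M)" using DM by simp
      also have "\<dots> \<le> (\<integral>x. indicator D x * U (Suc n) x \<partial>M)"
      proof (rule integral_mono)
        show "integrable M (\<lambda>x. indicator (D) x * lam)"
          by (rule int_ind[OF DM]) simp
        show "integrable M (\<lambda>x. indicator (D) x * U (Suc n) x)"
          by (rule int_ind[OF DM integ])
      qed
           (auto simp: D_def indicator_def)
      finally have 1: "lam * measure M D \<le> (\<integral>x. indicator D x * U (Suc n) x \<partial>M)" .
      have "(\<integral>x. indicator D x * U (Suc n) x \<partial>M) + (\<integral>x. indicator (S - D) x * U (Suc n) x \<partial>M)
          = (\<integral>x. indicator D x * U (Suc n) x + indicator (S - D) x * U (Suc n) x \<partial>M)"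
        by (rule Bochner_Integration.integral_add[symmetric]) (auto intro!: int_ind integ DM SM)
      also have "\<dots> = (\<integral>x. indicator S x * U (Suc n) x \<partial>M)"
        by (intro Bochner_Integration.integral_cong) (auto simp: indicator_def D_def)
      also have "\<dots> \<le> (\<integral>x. indicator S x * U n x \<partial>M)" using step[OF SG] .
      finally have 2: "(\<integral>x. indicator D x * U (Suc n) x \<partial>M) + (\<integral>x. indicator (S - D) x * U (Suc n) x \<partial>M)
          \<le> (\<integral>x. indicator S x * U n x \<partial>M)" .
      show ?case unfolding SD mB using Suc.IH 1 2 unfolding S_def by (simp add: algebra_simps)
    qed
    have bnd: "lam * measure M (Bs n) \<le> E" for n
    proof -
      have "0 \<le> (\<integral>x. indicator (space M - Bs n) x * U n x \<partial>M)"
        by (intro integral_nonneg_AE) (auto simp: nonneg)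
      then show ?thesis using inv[of n] by linarith
    qed
    have U: "(\<Union>n. Bs n) = {x\<in>space M. \<exists>j. U j x \<ge> lam}" by (auto simp: Bs_def)
    have inc: "incseq Bs" by (auto simp: incseq_def Bs_def intro: le_trans)
    have "(\<lambda>n. measure M (Bs n)) \<longlonglongrightarrow> measure M (\<Union>n. Bs n)"
      using BsM inc by (intro finite_Lim_measure_incseq) auto
    then have "(\<lambda>n. lam * measure M (Bs n)) \<longlonglongrightarrow> lam * measure M (\<Union>n. Bs n)"
      by (intro tendsto_mult tendsto_const)
    then have "lam * measure M (\<Union>n. Bs n) \<le> E"
      by (rule LIMSEQ_le_const2) (use bnd in auto)
    then show ?thesis unfolding U .
  qed
  define N where "N = (\<Inter>m. {x\<in>space M. \<exists>j. U j x \<ge> real (Suc m)})"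
 have EM: "{x\<in>space M. \<exists>j. c \<le> U j x} \<in> sets M" for c using measM by measurable
  have NM: "N \<in> sets M" unfolding N_def using measM by measurable
  have "measure M N = 0"
  proof (rule ccontr)
    assume "measure M N \<noteq> 0"
    then have pos: "measure M N > 0" by (simp add: zero_less_measure_iff)
    obtain m :: nat where m: "E / measure M N < real m" using reals_Archimedean2 by blast
    have "real (Suc m) * measure M N \<le> real (Suc m) * measure M {x\<in>space M. \<exists>j. U j x \<ge> real (Suc m)}"
      by (intro mult_left_mono finite_measure_mono EM) (auto simp: N_def)
    also have "\<dots> \<le> E" by (intro key) auto
    finally have "real (Suc m) * measure M N \<le> E" .
    moreover have "E < real m * measure M N" using m pos by (simp add: field_simps)
    ultimately show False using pos by (simp add: algebra_simps)
  qed
  then have "N \<in> null_sets M" using NM by (simp add: emeasure_eq_measure null_sets_def)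
  then show ?thesis
  proof (rule AE_I')
    show "{x \<in> space M. \<not> (\<exists>B. \<forall>n. U n x \<le> B)} \<subseteq> N"
      unfolding N_def by (auto simp: not_le intro: less_imp_le)
  qed
qed

lemma rec_int:
  fixes M :: "'w measure" and F :: "nat \<Rightarrow> 'w measure"
    and V :: "nat \<Rightarrow> 'w \<Rightarrow> real" and \<gamma> :: "nat \<Rightarrow> real"
    and a b C :: real
  assumes P: "prob_space M"
    and sub: "\<And>k. subalgebra M (F k)"
    and integ: "\<And>k. integrable M (V k)"
    and rec: "AE x in M. \<forall>k\<ge>1. real_cond_exp M (F (k - 1)) (V k) x
               \<le> (1 - a / real k + \<gamma> k) * V (k - 1) x + C / real k powr b"
    and k: "k \<ge> 1" and A: "A \<in> sets (F (k - 1))"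
  shows "(\<integral>x. indicator A x * V k x \<partial>M)
     \<le> (1 - a / real k + \<gamma> k) * (\<integral>x. indicator A x * V (k - 1) x \<partial>M) + C / real k powr b * measure M A"
proof -
  interpret prob_space M by (rule P)
  interpret finite_measure_subalgebra M "F (k - 1)"
    by unfold_locales (rule sub)
  have AM: "A \<in> sets M" using sub[of "k - 1"] A by (auto simp: subalgebra_def)
  have "(\<integral>x. indicator A x * V k x \<partial>M) = (\<integral>x. indicator A x * real_cond_exp M (F (k - 1)) (V k) x \<partial>M)"
    using real_cond_exp_intA[OF integ A] unfolding set_lebesgue_integral_def by simp
  also have "\<dots> \<le> (\<integral>x. indicator A x * ((1 - a / real k + \<gamma> k) * V (k - 1) x + C / real k powr b) \<partial>M)"
  proof (rule integral_mono_AE)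
    show "integrable M (\<lambda>x. indicator A x * real_cond_exp M (F (k - 1)) (V k) x)"
      by (rule int_ind[OF AM real_cond_exp_int(1)[OF integ]])
    show "integrable M (\<lambda>x. indicator A x * ((1 - a / real k + \<gamma> k) * V (k - 1) x + C / real k powr b))"
      by (rule int_ind[OF AM]) (intro Bochner_Integration.integrable_add integrable_mult_right integ integrable_const)
    show "AE x in M. indicator A x * real_cond_exp M (F (k - 1)) (V k) x
        \<le> indicator A x * ((1 - a / real k + \<gamma> k) * V (k - 1) x + C / real k powr b)"
      using rec by eventually_elim (use k in \<open>auto simp: indicator_def\<close>)
  qed
  also have "\<dots> = (\<integral>x. (1 - a / real k + \<gamma> k) * (indicator A x * V (k - 1) x) + C / real k powr b * indicator A x \<partial>M)"
    by (intro Bochner_Integration.integral_cong) (auto simp: algebra_simps)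
  also have "\<dots> = (1 - a / real k + \<gamma> k) * (\<integral>x. indicator A x * V (k - 1) x \<partial>M) + C / real k powr b * measure M A"
  proof -
    have i1: "integrable M (\<lambda>x. (1 - a / real k + \<gamma> k) * (indicator A x * V (k - 1) x))"
      using int_ind[OF AM integ[of "k - 1"]] by simp
    have i2: "integrable M (\<lambda>x. C / real k powr b * indicator A x)"
      by (intro integrable_mult_right integrable_real_indicator AM) (simp add: less_top[symmetric])
    show ?thesis
      unfolding Bochner_Integration.integral_add[OF i1 i2] using AM by simp
  qed
  finally show ?thesis .
qed

lemma core_rate:
  fixes M :: "'w measure" and F :: "nat \<Rightarrow> 'w measure"
    and V :: "nat \<Rightarrow> 'w \<Rightarrow> real" and \<gamma> :: "nat \<Rightarrow> real"
    and a b C :: real and \<rho> \<epsilon> :: "nat \<Rightarrow> real" and K :: nat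
  assumes P: "prob_space M"
    and sub: "\<And>k. subalgebra M (F k)"
    and mono: "\<And>k. sets (F k) \<subseteq> sets (F (Suc k))"
    and adapted: "\<And>k. V k \<in> borel_measurable (F k)"
    and integ: "\<And>k. integrable M (V k)"
    and nonneg: "\<And>k x. x \<in> space M \<Longrightarrow> V k x \<ge> 0"
    and C: "C \<ge> 0"
    and rec: "AE x in M. \<forall>k\<ge>1. real_cond_exp M (F (k - 1)) (V k) x
               \<le> (1 - a / real k + \<gamma> k) * V (k - 1) x + C / real k powr b"
    and rho_nn: "\<And>k. \<rho> k \<ge> 0" and rho_pos: "\<And>k. k \<ge> K \<Longrightarrow> \<rho> k > 0" and K: "K \<ge> 1"
    and eps_nn: "\<And>k. \<epsilon> k \<ge> 0" and eps_sum: "summable \<epsilon>"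
    and contr: "\<And>k. k > K \<Longrightarrow> \<rho> k * (1 - a / real k + \<gamma> k) \<le> \<rho> (k - 1) * exp (\<epsilon> k)"
    and rsum: "summable (\<lambda>k. \<rho> k / real k powr b)"
  shows "AE x in M. \<exists>B. \<forall>k\<ge>K. V k x \<le> B / \<rho> k"
proof -
  interpret prob_space M by (rule P)
  define E where "E k = (\<Sum>j\<le>k. \<epsilon> j)" for k
  define Emax where "Emax = suminf \<epsilon>"
  have E_le: "E k \<le> Emax" for k unfolding E_def Emax_def
    by (rule sum_le_suminf[OF eps_sum]) (auto intro: eps_nn)
  have E_Suc: "E (Suc k) = E k + \<epsilon> (Suc k)" for k unfolding E_def by simp
  define c where "c k = \<rho> k * exp (- E k)" for k
  have c_nn: "c k \<ge> 0" for k unfolding c_def using rho_nn[of k] by simp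
  define g where "g k = c k * C / real k powr b" for k
  have g_nn: "g k \<ge> 0" for k unfolding g_def using c_nn[of k] C by simp
  have g_sum: "summable g"
  proof (rule summable_comparison_test')
    show "summable (\<lambda>k. C * (\<rho> k / real k powr b))" using rsum by (rule summable_mult)
    show "norm (g k) \<le> C * (\<rho> k / real k powr b)" for k
    proof -
      have "c k \<le> \<rho> k" unfolding c_def using rho_nn[of k] E_le[of k]
        by (smt (verit) E_def eps_nn exp_le_one_iff mult_left_le sum_nonneg)
      then have "c k * C / real k powr b \<le> \<rho> k * C / real k powr b"
        using C by (intro divide_right_mono mult_right_mono) auto
      then show ?thesis using c_nn[of k] C unfolding g_def by (simp add: abs_of_nonneg mult.commute)
    qed
  qed
  define d where "d k = suminf g - (\<Sum>j\<le>k. g j)" for k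
  have d_nn: "d k \<ge> 0" for k unfolding d_def
    using sum_le_suminf[OF g_sum, of "{..k}"] g_nn by auto
  have d_Suc: "d k = g (Suc k) + d (Suc k)" for k unfolding d_def by simp
  define U where "U n x = c (K + n) * V (K + n) x + d (K + n)" for n x
  define G where "G n = F (K + n)" for n
  have AEb: "AE x in M. \<exists>B. \<forall>n. U n x \<le> B"
  proof (rule maximal_bounded[OF P])
    show "subalgebra M (G n)" for n unfolding G_def by (rule sub)
    show "sets (G n) \<subseteq> sets (G (Suc n))" for n unfolding G_def using mono[of "K + n"] by simp
    show "U n \<in> borel_measurable (G n)" for n unfolding U_def G_def
      using adapted[of "K + n"] by measurable
    show "integrable M (U n)" for n unfolding U_def
      by (intro Bochner_Integration.integrable_add integrable_mult_right integ integrable_const)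
    show "U n x \<ge> 0" if "x \<in> space M" for n x unfolding U_def
      using c_nn d_nn nonneg[OF that] by simp
    show "(\<integral>x. indicator A x * U (Suc n) x \<partial>M) \<le> (\<integral>x. indicator A x * U n x \<partial>M)"
      if A: "A \<in> sets (G n)" for n A
    proof -
      define k where "k = Suc (K + n)"
      have k1: "k \<ge> 1" "k > K" and km: "k - 1 = K + n" unfolding k_def by auto
      have AF: "A \<in> sets (F (k - 1))" using A unfolding G_def km .
      have AM: "A \<in> sets M" using sub[of "k - 1"] AF by (auto simp: subalgebra_def)
      have lin: "(\<integral>x. indicator A x * (c j * V j x + d j) \<partial>M)
          = c j * (\<integral>x. indicator A x * V j x \<partial>M) + d j * measure M A" for j
      proof -
        have i1: "integrable M (\<lambda>x. c j * (indicator A x * V j x))"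
          using int_ind[OF AM integ[of j]] by simp
        have i2: "integrable M (\<lambda>x. d j * indicator A x)"
          by (intro integrable_mult_right integrable_real_indicator AM) (simp add: less_top[symmetric])
        have "(\<integral>x. indicator A x * (c j * V j x + d j) \<partial>M)
            = (\<integral>x. c j * (indicator A x * V j x) + d j * indicator A x \<partial>M)"
          by (intro Bochner_Integration.integral_cong) (auto simp: algebra_simps)
        also have "\<dots> = c j * (\<integral>x. indicator A x * V j x \<partial>M) + d j * measure M A"
          unfolding Bochner_Integration.integral_add[OF i1 i2] using AM by simp
        finally show ?thesis .
      qed
      have U1: "U (Suc n) = (\<lambda>x. c k * V k x + d k)" unfolding U_def k_def by auto
      have U0: "U n = (\<lambda>x. c (k - 1) * V (k - 1) x + d (k - 1))" unfolding U_def km by auto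
      define I where "I = (\<integral>x. indicator A x * V (k - 1) x \<partial>M)"
      have I_nn: "I \<ge> 0" unfolding I_def
        by (intro integral_nonneg_AE) (auto simp: nonneg)
      have R: "(\<integral>x. indicator A x * V k x \<partial>M)
          \<le> (1 - a / real k + \<gamma> k) * I + C / real k powr b * measure M A"
        unfolding I_def by (rule rec_int[OF P sub integ rec k1(1) AF])
      have cc: "c k * (1 - a / real k + \<gamma> k) \<le> c (k - 1)"
      proof -
        have "c k * (1 - a / real k + \<gamma> k) = \<rho> k * (1 - a / real k + \<gamma> k) * exp (- E k)"
          unfolding c_def by simp
        also have "\<dots> \<le> \<rho> (k - 1) * exp (\<epsilon> k) * exp (- E k)"
          using contr[OF k1(2)] by simp
        also have "\<dots> = c (k - 1)"
        proof -
          have "E k = E (k - 1) + \<epsilon> k" using E_Suc[of "k - 1"] k1 by simp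
          then show ?thesis unfolding c_def by (simp add: exp_diff[symmetric] exp_add[symmetric])
        qed
        finally show ?thesis .
      qed
      have "(\<integral>x. indicator A x * U (Suc n) x \<partial>M) = c k * (\<integral>x. indicator A x * V k x \<partial>M) + d k * measure M A"
        unfolding U1 by (rule lin)
      also have "\<dots> \<le> c k * ((1 - a / real k + \<gamma> k) * I + C / real k powr b * measure M A) + d k * measure M A"
        using R c_nn[of k] by (intro add_right_mono mult_left_mono) auto
      also have "\<dots> = (c k * (1 - a / real k + \<gamma> k)) * I + (g k + d k) * measure M A"
        unfolding g_def by (simp add: algebra_simps)
      also have "\<dots> \<le> c (k - 1) * I + d (k - 1) * measure M A"
        using cc I_nn d_Suc[of "k - 1"] k1 by (simp add: mult_right_mono)
      also have "\<dots> = (\<integral>x. indicator A x * U n x \<partial>M)"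
        unfolding U0 I_def by (rule lin[symmetric])
      finally show ?thesis .
    qed
  qed
  show ?thesis
    using AEb AE_space
  proof eventually_elim
    case (elim x)
    then obtain B where B: "\<And>n. U n x \<le> B" by blast
    show ?case
    proof (intro exI allI impI)
      fix k assume kK: "K \<le> k"
      have "c k * V k x \<le> B" using B[of "k - K"] d_nn[of k] kK unfolding U_def by simp
      then have "V k x * \<rho> k \<le> B * exp (E k)"
        unfolding c_def by (simp add: exp_minus field_simps)
      also have "\<dots> \<le> max B 0 * exp Emax"
        by (intro mult_mono) (auto simp: E_le)
      finally show "V k x \<le> max B 0 * exp Emax / \<rho> k"
        using rho_pos[OF kK] by (simp add: pos_le_divide_eq)
    qed
  qed
qed

lemma key_ineq:
  fixes s :: real and k :: nat
  assumes s: "s > 0" and k: "k \<ge> 2"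
  shows "real k powr s * (1 - s / real k) \<le> real (k - 1) powr s * exp (2 * s / (real k)\<^sup>2)"
proof (cases "1 - s / real k \<le> 0")
  case True
  then have "real k powr s * (1 - s / real k) \<le> 0" by (simp add: mult_nonneg_nonpos)
  also have "0 \<le> real (k - 1) powr s * exp (2 * s / (real k)\<^sup>2)" by simp
  finally show ?thesis .
next
  case False
  define x where "x = 1 / real k"
  have x0: "0 \<le> x" and x2: "x \<le> 1/2" unfolding x_def using k by (auto simp: field_simps)
  have kpos: "real k > 0" using k by simp
  have km: "real (k - 1) = real k * (1 - x)" unfolding x_def using k by (simp add: field_simps of_nat_diff)
  have ln1: "- x - 2 * x\<^sup>2 \<le> ln (1 - x)" by (rule ln_one_minus_pos_lower_bound[OF x0 x2])
  have "(1 - x) powr s = exp (s * ln (1 - x))" using x2 by (simp add: powr_def)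
  also have "\<dots> \<ge> exp (- s * x - 2 * s * x\<^sup>2)"
    using mult_left_mono[OF ln1, of s] s by (simp add: algebra_simps)
  finally have p: "(1 - x) powr s \<ge> exp (- s * x - 2 * s * x\<^sup>2)" .
  have e: "1 - s * x \<le> exp (- s * x)" using exp_ge_add_one_self[of "- s * x"] by simp
  have "real k powr s * (1 - s / real k) = real k powr s * (1 - s * x)" unfolding x_def by simp
  also have "\<dots> \<le> real k powr s * exp (- s * x)" using e by (intro mult_left_mono) auto
  also have "\<dots> = real k powr s * exp (- s * x - 2 * s * x\<^sup>2) * exp (2 * s * x\<^sup>2)"
    by (simp add: mult.assoc exp_add[symmetric])
  also have "\<dots> \<le> real k powr s * (1 - x) powr s * exp (2 * s * x\<^sup>2)"
    using p by (intro mult_right_mono mult_left_mono) auto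
  also have "\<dots> = real (k - 1) powr s * exp (2 * s / (real k)\<^sup>2)"
    unfolding km using x2 kpos by (simp add: powr_mult x_def power_divide)
  finally show ?thesis .
qed

lemma contr_gen:
  fixes \<rho> \<delta> \<gamma> :: "nat \<Rightarrow> real" and L a :: real and k :: nat
  assumes "\<rho> k * (1 - a / real k) \<le> \<rho> (k - 1) * exp (\<delta> k)"
    and "\<rho> k \<le> L * \<rho> (k - 1)" and "\<rho> (k - 1) \<ge> 0" and "L \<ge> 0" and "\<gamma> k \<ge> 0" and "\<delta> k \<ge> 0"
  shows "\<rho> k * (1 - a / real k + \<gamma> k) \<le> \<rho> (k - 1) * exp (\<delta> k + L * \<gamma> k)"
proof -
  have "\<rho> k * (1 - a / real k + \<gamma> k) = \<rho> k * (1 - a / real k) + \<rho> k * \<gamma> k" by (simp add: algebra_simps)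
  also have "\<dots> \<le> \<rho> (k - 1) * exp (\<delta> k) + L * \<rho> (k - 1) * \<gamma> k"
    using assms by (intro add_mono mult_right_mono) auto
  also have "\<dots> \<le> \<rho> (k - 1) * exp (\<delta> k) * (1 + L * \<gamma> k)"
  proof -
    have n: "0 \<le> L * \<rho> (k - 1) * \<gamma> k" using assms by simp
    have o: "1 \<le> exp (\<delta> k)" using assms by simp
    have "L * \<rho> (k - 1) * \<gamma> k \<le> L * \<rho> (k - 1) * \<gamma> k * exp (\<delta> k)"
      using mult_left_mono[OF o n] by simp
    then show ?thesis by (simp add: algebra_simps)
  qed
  also have "\<dots> \<le> \<rho> (k - 1) * exp (\<delta> k) * exp (L * \<gamma> k)"
    using assms exp_ge_add_one_self[of "L * \<gamma> k"] by (intro mult_left_mono) auto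
  also have "\<dots> = \<rho> (k - 1) * exp (\<delta> k + L * \<gamma> k)" by (simp add: exp_add)
  finally show ?thesis .
qed

lemma summable_bertrand: "summable (\<lambda>k. 1 / (real k * (ln (real k))\<^sup>2))"
proof -
  define f where "f n = 1 / (max (real n) 2 * (ln (max (real n) 2))\<^sup>2)" for n :: nat
  have ln2: "ln 2 > (0::real)" by simp
  have fpos: "f n > 0" for n unfolding f_def using ln2
    by (auto intro!: divide_pos_pos mult_pos_pos simp: max_def)
  have "summable f"
  proof (subst condensation_test)
    show "f (Suc m) \<le> f m" if "0 < m" for m
    proof -
      have a: "max (real m) 2 \<le> max (real (Suc m)) 2" by auto
      have l: "ln (max (real m) 2) \<le> ln (max (real (Suc m)) 2)" using a by simp
      have l0: "0 < ln (max (real m) 2)" by (simp add: max_def)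
      have "max (real m) 2 * (ln (max (real m) 2))\<^sup>2 \<le> max (real (Suc m)) 2 * (ln (max (real (Suc m)) 2))\<^sup>2"
        using a l l0 by (intro mult_mono power_mono) auto
      moreover have "0 < max (real m) 2 * (ln (max (real m) 2))\<^sup>2" using l0 by simp
      ultimately show ?thesis unfolding f_def by (intro divide_left_mono) auto
    qed
    show "f n \<ge> 0" for n using fpos[of n] by simp
    show "summable (\<lambda>n. 2 ^ n * f (2 ^ n))"
    proof (rule summable_comparison_test')
      show "summable (\<lambda>n. 1 / (ln 2)\<^sup>2 * inverse (real n ^ 2))"
        by (intro summable_mult inverse_power_summable) auto
      show "norm (2 ^ n * f (2 ^ n)) \<le> 1 / (ln 2)\<^sup>2 * inverse (real n ^ 2)" if "n \<ge> 1" for n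
      proof -
        have "(2::real) ^ 1 \<le> 2 ^ n" using that by (intro power_increasing) auto
        then have m: "max (real (2 ^ n)) 2 = 2 ^ n" by (simp add: max_def)
        have "2 ^ n * f (2 ^ n) = 1 / (ln (2 ^ n))\<^sup>2" unfolding f_def m by simp
        also have "\<dots> = 1 / (ln 2)\<^sup>2 * inverse (real n ^ 2)" by (simp add: ln_realpow power_mult_distrib divide_inverse mult.commute)
        finally show ?thesis using fpos[of "2 ^ n"] by simp
      qed
    qed
  qed
  moreover have ev: "eventually (\<lambda>n. f n = 1 / (real n * (ln (real n))\<^sup>2)) sequentially"
    using eventually_ge_at_top[of 2] by eventually_elim (simp add: f_def max_def)
  ultimately show ?thesis using summable_cong[OF ev] by simp
qed

lemma AE_bigo:
  fixes M :: "'w measure" and V :: "nat \<Rightarrow> 'w \<Rightarrow> real" and \<rho> h :: "nat \<Rightarrow> real"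
  assumes AEB: "AE x in M. \<exists>B. \<forall>k\<ge>K. V k x \<le> B / \<rho> k"
    and nonneg: "\<And>k x. x \<in> space M \<Longrightarrow> V k x \<ge> 0"
    and h: "\<And>k. k \<ge> K \<Longrightarrow> 1 / \<rho> k = h k"
  shows "AE x in M. (\<lambda>k. V k x) \<in> O(h)"
  using AEB AE_space
proof eventually_elim
  case (elim x)
  then obtain B where B: "\<And>k. k \<ge> K \<Longrightarrow> V k x \<le> B / \<rho> k" by blast
  show ?case
  proof (rule bigoI[of _ "abs B"])
    show "eventually (\<lambda>k. norm (V k x) \<le> abs B * norm (h k)) sequentially"
      using eventually_ge_at_top[of K]
    proof eventually_elim
      case (elim k)
      have "norm (V k x) = V k x" using nonneg[OF \<open>x \<in> space M\<close>] by simp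
      also have "\<dots> \<le> B * h k" using B[OF elim] h[OF elim] by (simp add: divide_inverse)
      also have "\<dots> \<le> abs B * norm (h k)"
        by (metis abs_ge_self abs_mult real_norm_def)
      finally show ?case .
    qed
  qed
qed

lemma rate_case1:
  fixes a b :: real and \<gamma> :: "nat \<Rightarrow> real"
  assumes a: "a > 0" and g: "\<And>k. \<gamma> k \<ge> 0" and k: "k > 2"
  shows "real k powr a * (1 - a / real k + \<gamma> k)
     \<le> real (k - 1) powr a * exp (2 * a / (real k)\<^sup>2 + 2 powr a * \<gamma> k)"
proof (rule contr_gen[where \<rho> = "\<lambda>k. real k powr a" and \<delta> = "\<lambda>k. 2 * a / (real k)\<^sup>2"])
  show "real k powr a * (1 - a / real k) \<le> real (k - 1) powr a * exp (2 * a / (real k)\<^sup>2)"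
    using key_ineq[OF a, of k] k by simp
  have "real k \<le> 2 * real (k - 1)" using k by (simp add: of_nat_diff)
  then have "real k powr a \<le> (2 * real (k - 1)) powr a" using a by (intro powr_mono2) auto
  then show "real k powr a \<le> 2 powr a * real (k - 1) powr a" by (simp add: powr_mult)
qed (use a g in auto)

lemma rate_case2:
  fixes a b :: real and \<gamma> :: "nat \<Rightarrow> real"
  assumes s: "s > 0" and sa: "s \<le> a" and g: "\<And>k. \<gamma> k \<ge> 0" and k: "k > 3"
  shows "real k powr s / (ln (real k))\<^sup>2 * (1 - a / real k + \<gamma> k)
     \<le> real (k - 1) powr s / (ln (real (k - 1)))\<^sup>2 * exp (2 * s / (real k)\<^sup>2 + 2 powr s * \<gamma> k)"
proof (rule contr_gen[where \<rho> = "\<lambda>k. real k powr s / (ln (real k))\<^sup>2" and \<delta> = "\<lambda>k. 2 * s / (real k)\<^sup>2"])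
  have l1: "0 < ln (real (k - 1))" using k by simp
  have l2: "ln (real (k - 1)) \<le> ln (real k)" using k by simp
  have lsq: "(ln (real (k - 1)))\<^sup>2 \<le> (ln (real k))\<^sup>2" using l1 l2 by (intro power_mono) auto
  have lsq0: "0 < (ln (real (k - 1)))\<^sup>2" using l1 by simp
  have lk0: "0 < (ln (real k))\<^sup>2" using k by simp
  show "real k powr s / (ln (real k))\<^sup>2 * (1 - a / real k)
      \<le> real (k - 1) powr s / (ln (real (k - 1)))\<^sup>2 * exp (2 * s / (real k)\<^sup>2)"
  proof (cases "1 - a / real k \<le> 0")
    case True
    then have "real k powr s / (ln (real k))\<^sup>2 * (1 - a / real k) \<le> 0" by (intro mult_nonneg_nonpos) auto
    also have "0 \<le> real (k - 1) powr s / (ln (real (k - 1)))\<^sup>2 * exp (2 * s / (real k)\<^sup>2)" by simp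
    finally show ?thesis .
  next
    case False
    have "real k powr s / (ln (real k))\<^sup>2 * (1 - a / real k)
        \<le> real k powr s / (ln (real k))\<^sup>2 * (1 - s / real k)"
      using sa k by (intro mult_left_mono) (auto simp: divide_right_mono)
    also have "\<dots> = (real k powr s * (1 - s / real k)) / (ln (real k))\<^sup>2" by simp
    also have "\<dots> \<le> (real (k - 1) powr s * exp (2 * s / (real k)\<^sup>2)) / (ln (real k))\<^sup>2"
      using key_ineq[OF s, of k] k by (intro divide_right_mono) auto
    also have "\<dots> \<le> (real (k - 1) powr s * exp (2 * s / (real k)\<^sup>2)) / (ln (real (k - 1)))\<^sup>2"
      using lsq lsq0 lk0 by (intro divide_left_mono mult_pos_pos) auto
    finally show ?thesis by simp
  qed
  have "real k \<le> 2 * real (k - 1)" using k by (simp add: of_nat_diff)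
  then have "real k powr s \<le> (2 * real (k - 1)) powr s" using s by (intro powr_mono2) auto
  then have "real k powr s \<le> 2 powr s * real (k - 1) powr s" by (simp add: powr_mult)
  then have "real k powr s / (ln (real k))\<^sup>2 \<le> 2 powr s * real (k - 1) powr s / (ln (real k))\<^sup>2"
    by (intro divide_right_mono) auto
  also have "\<dots> \<le> 2 powr s * real (k - 1) powr s / (ln (real (k - 1)))\<^sup>2"
    using lsq lsq0 lk0 by (intro divide_left_mono mult_pos_pos) auto
  finally show "real k powr s / (ln (real k))\<^sup>2 \<le> 2 powr s * (real (k - 1) powr s / (ln (real (k - 1)))\<^sup>2)"
    by simp
qed (use s g in auto)

lemma summable_inv_sq: "summable (\<lambda>k. c / (real k)\<^sup>2)"
proof -
  have "summable (\<lambda>k. c * inverse (real k ^ 2))" by (intro summable_mult inverse_power_summable) auto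
  then show ?thesis by (simp add: divide_inverse)
qed

theorem lemmaA9:
  fixes M :: "'w measure" and F :: "nat \<Rightarrow> 'w measure"
    and V :: "nat \<Rightarrow> 'w \<Rightarrow> real" and \<gamma> :: "nat \<Rightarrow> real"
    and a b C :: real
  assumes "prob_space M"
    and sub: "\<And>k. subalgebra M (F k)"
    and mono: "\<And>k. sets (F k) \<subseteq> sets (F (Suc k))"
    and adapted: "\<And>k. V k \<in> borel_measurable (F k)"
    and integ: "\<And>k. integrable M (V k)"
    and nonneg: "\<And>k x. x \<in> space M \<Longrightarrow> V k x \<ge> 0"
    and a: "a > 0" and b: "b > 1" and C: "C > 0"
    and gamma_nonneg: "\<And>k. \<gamma> k \<ge> 0" and gamma_sum: "summable \<gamma>"
    and rec: "AE x in M. \<forall>k\<ge>1. real_cond_exp M (F (k - 1)) (V k) x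
               \<le> (1 - a / real k + \<gamma> k) * V (k - 1) x + C / real k powr b"
  shows "(b - a > 1 \<longrightarrow> (AE x in M. (\<lambda>k. V k x) \<in> O(\<lambda>k. real k powr (- a))))
       \<and> (b - a \<le> 1 \<longrightarrow> (AE x in M. (\<lambda>k. V k x) \<in> O(\<lambda>k. (ln (real k))\<^sup>2 / real k powr (b - 1))))"
proof (intro conjI impI)
  assume h: "b - a > 1"
  have "AE x in M. \<exists>B. \<forall>k\<ge>2. V k x \<le> B / real k powr a"
  proof (rule core_rate[OF assms(1) sub mono adapted integ nonneg _ rec,
        where \<rho> = "\<lambda>k. real k powr a" and \<epsilon> = "\<lambda>k. 2 * a / (real k)\<^sup>2 + 2 powr a * \<gamma> k"])
    show "summable (\<lambda>k. 2 * a / (real k)\<^sup>2 + 2 powr a * \<gamma> k)"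
      by (intro summable_add summable_inv_sq summable_mult gamma_sum)
    show "real k powr a * (1 - a / real k + \<gamma> k) \<le> real (k - 1) powr a * exp (2 * a / (real k)\<^sup>2 + 2 powr a * \<gamma> k)"
      if "k > 2" for k using rate_case1[OF a gamma_nonneg that] .
    have "(\<lambda>k. real k powr a / real k powr b) = (\<lambda>k. real k powr (a - b))"
      by (simp add: powr_diff)
    moreover have "summable (\<lambda>k. real k powr (a - b))" using h by (subst summable_real_powr_iff) auto
    ultimately show "summable (\<lambda>k. real k powr a / real k powr b)" by simp
  qed (use C a gamma_nonneg in auto)
  then show "AE x in M. (\<lambda>k. V k x) \<in> O(\<lambda>k. real k powr (- a))"
    by (rule AE_bigo[OF _ nonneg]) (simp_all only: powr_minus_divide)
next
  assume h: "b - a \<le> 1"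
  define s where "s = b - 1"
  have s: "s > 0" "s \<le> a" using b h unfolding s_def by auto
  have "AE x in M. \<exists>B. \<forall>k\<ge>3. V k x \<le> B / (real k powr s / (ln (real k))\<^sup>2)"
  proof (rule core_rate[OF assms(1) sub mono adapted integ nonneg _ rec,
        where \<rho> = "\<lambda>k. real k powr s / (ln (real k))\<^sup>2" and \<epsilon> = "\<lambda>k. 2 * s / (real k)\<^sup>2 + 2 powr s * \<gamma> k"])
    show "summable (\<lambda>k. 2 * s / (real k)\<^sup>2 + 2 powr s * \<gamma> k)"
      by (intro summable_add summable_inv_sq summable_mult gamma_sum)
    show "real k powr s / (ln (real k))\<^sup>2 * (1 - a / real k + \<gamma> k)
        \<le> real (k - 1) powr s / (ln (real (k - 1)))\<^sup>2 * exp (2 * s / (real k)\<^sup>2 + 2 powr s * \<gamma> k)"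
      if "k > 3" for k using rate_case2[OF s gamma_nonneg that] .
    show "real k powr s / (ln (real k))\<^sup>2 > 0" if "k \<ge> 3" for k
      using that by simp
    have "real k powr s / (ln (real k))\<^sup>2 / real k powr b = 1 / (real k * (ln (real k))\<^sup>2)" for k
    proof (cases "k = 0 \<or> k = 1")
      case True then show ?thesis by auto
    next
      case False
      then have k2: "real k > 1" by simp
      have "real k powr s = real k powr b / real k" unfolding s_def using k2 by (simp add: powr_diff)
      moreover have "ln (real k) \<noteq> 0" using k2 by simp
      ultimately show ?thesis using k2 by (simp add: field_simps)
    qed
    then show "summable (\<lambda>k. real k powr s / (ln (real k))\<^sup>2 / real k powr b)"
      using summable_bertrand by simp
  qed (use C s gamma_nonneg in auto)
  then show "AE x in M. (\<lambda>k. V k x) \<in> O(\<lambda>k. (ln (real k))\<^sup>2 / real k powr (b - 1))"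
  proof (rule AE_bigo[OF _ nonneg])
    show "1 / (real k powr s / (ln (real k))\<^sup>2) = (ln (real k))\<^sup>2 / real k powr (b - 1)" for k
      unfolding s_def by simp
  qed
qed

end
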